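(* Let $0<q<1$ (in the paper $q=1/p$ for a prime $p$). For all integers $k\ge0$ and $s\ge0$, $$T_1(k,s)=\frac{\Pi_k(q^2)}{\Pi_{2k}(q)}\Big(1-q^{s+1}\sum_{j=0}^{k-1}q^{2j}\frac{\Pi_{2j}(q)\,\Pi_{j+s}(q^2)}{\Pi_j(q^2)^2\,\Pi_s(q^2)}\Big)$$ and $$T_3(k,s)=\frac{\Pi_k(q^2)}{\Pi_{2k+1}(q)}\Big(1-q-q^{3s+3}\sum_{j=0}^{k-1}q^{2j}\frac{\Pi_{2j+1}(q)\,\Pi_{j+s}(q^2)}{\Pi_j(q^2)^2\,\Pi_s(q^2)}\Big).$$
   Context: For $n\ge 0$, $\Pi_n(q)=\prod_{j=1}^n(1-q^j)$ (so $\Pi_0=1$). For $\beta\in\{1,3\}$, $k\ge0$, $s\ge0$: $T_\beta(k,s)=1$ if $k=0$, and $T_\beta(k,s)=\sum_{j=0}^{s} q^{\beta j}\,\frac{\Pi_{k+j-1}(q^2)}{\Pi_j(q^2)\,\Pi_{k-1}(q^2)}$ if $k\ge1$. Empty sums are $0$. *)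

theory Defs
  imports Complex_Main
begin

definition qPi :: "nat \<Rightarrow> real \<Rightarrow> real" where
  "qPi n q = (\<Prod>j=1..n. 1 - q ^ j)"

definition T :: "nat \<Rightarrow> real \<Rightarrow> nat \<Rightarrow> nat \<Rightarrow> real" where
  "T \<beta> q k s = (if k = 0 then 1 else
     (\<Sum>j=0..s. q ^ (\<beta> * j) * qPi (k + j - 1) (q^2) / (qPi j (q^2) * qPi (k - 1) (q^2))))"

end

theory Submission
  imports Defs
begin

lemma qPi_0[simp]: "qPi 0 Q = 1" unfolding qPi_def by simp

lemma qPi_Suc: "qPi (Suc n) Q = qPi n Q * (1 - Q ^ Suc n)"
  unfolding qPi_def by (simp add: prod.nat_ivl_Suc' mult.commute)

lemma qPi_pos: assumes "0 < Q" "Q < 1" shows "qPi n Q > 0"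
  unfolding qPi_def
proof (rule prod_pos)
  fix j assume "j \<in> {1..n}"
  then have "Q ^ j < 1" using assms by (simp add: power_less_one_iff)
  then show "0 < 1 - Q ^ j" by simp
qed

definition bb :: "real \<Rightarrow> nat \<Rightarrow> nat \<Rightarrow> real" where
  "bb Q k j = qPi (k + j) Q / (qPi k Q * qPi j Q)"

definition V :: "real \<Rightarrow> real \<Rightarrow> nat \<Rightarrow> nat \<Rightarrow> real" where
  "V x Q k s = (\<Sum>j=0..s. x ^ j * bb Q k j)"

definition Pp :: "real \<Rightarrow> real \<Rightarrow> nat \<Rightarrow> real" where
  "Pp x Q m = (\<Prod>i<m. 1 - x * Q ^ i)"

definition TT :: "real \<Rightarrow> real \<Rightarrow> nat \<Rightarrow> nat \<Rightarrow> real" where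
  "TT x Q m s = (if m = 0 then 1 else V x Q (m - 1) s)"

definition RR :: "real \<Rightarrow> real \<Rightarrow> nat \<Rightarrow> nat \<Rightarrow> real" where
  "RR x Q m s = 1 / Pp x Q m * (1 - x ^ (s+1) * (\<Sum>j<m. Q ^ j * Pp x Q j * bb Q j s))"

lemma bb_0'[simp]: assumes "0 < Q" "Q < 1" shows "bb Q k 0 = 1" "bb Q 0 j = 1"
  using qPi_pos[OF assms, of k] qPi_pos[OF assms, of j] unfolding bb_def by auto


lemma key: "\<And>A B C a b u::real. A \<noteq> 0 \<Longrightarrow> B \<noteq> 0 \<Longrightarrow> a \<noteq> 0 \<Longrightarrow> b \<noteq> 0 \<Longrightarrow>
       C * (a + u * b) / ((A * a) * (B * b)) = C / (A * (B * b)) + u * (C / ((A * a) * B))"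
proof -
  fix A B C a b u :: real
  assume "A \<noteq> 0" "B \<noteq> 0" "a \<noteq> 0" "b \<noteq> 0"
  then have "C * (a + u * b) / ((A * a) * (B * b)) = C*a / ((A * a) * (B * b)) + C*(u*b) / ((A * a) * (B * b))"
    by (simp add: distrib_left add_divide_distrib)
  also have "\<dots> = C / (A * (B * b)) + u * (C / ((A * a) * B))"
    using \<open>a \<noteq> 0\<close> \<open>b \<noteq> 0\<close> by (simp add: ac_simps)
  finally show "C * (a + u * b) / ((A * a) * (B * b)) = C / (A * (B * b)) + u * (C / ((A * a) * B))" .
qed

lemma lin3: "(V1::real) = V0 + c*S \<Longrightarrow> V1 = S + t \<Longrightarrow> (1-c)*V1 = V0 - c*t"
proof -
  assume a: "V1 = V0 + c*S" and b: "V1 = S + t"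
  have "c*V1 = c*S + c*t" using b by (simp add: distrib_left)
  moreover have "(1-c)*V1 = V1 - c*V1" by (simp add: left_diff_distrib)
  ultimately show ?thesis using a by linarith
qed

context
  fixes x Q :: real
  assumes Q0: "0 < Q" and Q1: "Q < 1" and x0: "0 < x" and x1: "x < 1"
begin

lemma nz: "qPi n Q \<noteq> 0" using qPi_pos[OF Q0 Q1, of n] by simp

lemma powlt: "Q ^ Suc n < 1" using Q0 Q1 by (metis power_Suc_less_one less_le)

lemma pascal: "bb Q (k+1) (j+1) = bb Q k (j+1) + Q^(k+1) * bb Q (k+1) j"
proof -
  have a: "qPi (k+1+(j+1)) Q = qPi (k+(j+1)) Q * (1 - Q^(k+j+2))"
    using qPi_Suc[of "k+j+1" Q] by simp
  have b: "qPi (k+1) Q = qPi k Q * (1 - Q^(k+1))" using qPi_Suc[of k Q] by simp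
  have c: "qPi (j+1) Q = qPi j Q * (1 - Q^(j+1))" using qPi_Suc[of j Q] by simp
  have d: "qPi (k+(j+1)) Q = qPi (k+1+j) Q" by (simp add: ac_simps)
  have e1: "1 - Q^(k+1) \<noteq> 0" using powlt[of k] by simp
  have e2: "1 - Q^(j+1) \<noteq> 0" using powlt[of j] by simp
  have p: "Q^(k+j+2) = Q^(k+1) * Q^(j+1)" by (simp add: power_add[symmetric] ac_simps)
  have cc: "1 - Q^(k+j+2) = (1 - Q^(k+1)) + Q^(k+1) * (1 - Q^(j+1))" unfolding p by (simp add: algebra_simps)
  show ?thesis unfolding bb_def a b c d
    by (subst cc, rule key[OF nz nz e1 e2])
qed

lemma Vdiff: "V x Q (k+1) s - V x Q k s = Q^(k+1) * x * (\<Sum>j<s. x^j * bb Q (k+1) j)"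
proof (induction s)
  case 0
  then show ?case unfolding V_def using bb_0'[OF Q0 Q1] by simp
next
  case (Suc s)
  have "V x Q (k+1) (Suc s) - V x Q k (Suc s) = (V x Q (k+1) s - V x Q k s)
     + x^(Suc s) * (bb Q (k+1) (s+1) - bb Q k (s+1))"
    unfolding V_def by (simp add: algebra_simps)
  also have "\<dots> = Q^(k+1) * x * (\<Sum>j<Suc s. x^j * bb Q (k+1) j)"
    unfolding Suc pascal by (simp add: algebra_simps)
  finally show ?case .
qed

lemma Vrec: "(1 - x*Q^(k+1)) * V x Q (k+1) s = V x Q k s - Q^(k+1) * x^(s+1) * bb Q (k+1) s"
proof -
  have "V x Q (k+1) s = (\<Sum>j<s. x^j * bb Q (k+1) j) + x^s * bb Q (k+1) s"
    unfolding V_def by (simp add: atLeast0AtMost lessThan_Suc_atMost[symmetric])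
  moreover have "V x Q (k+1) s = V x Q k s + Q^(k+1) * x * (\<Sum>j<s. x^j * bb Q (k+1) j)"
    using Vdiff[of k s] by linarith
  ultimately have "(1 - Q^(k+1) * x) * V x Q (k+1) s = V x Q k s - Q^(k+1) * x * (x^s * bb Q (k+1) s)"
    using lin3 by blast
  moreover have "Q^(k+1) * x * (x^s * bb Q (k+1) s) = Q^(k+1) * x^(s+1) * bb Q (k+1) s"
    by (simp add: mult_ac)
  ultimately show ?thesis by (simp add: mult.commute)
qed

lemma V0: "(1 - x) * V x Q 0 s = 1 - x^(s+1)"
  unfolding V_def using bb_0'[OF Q0 Q1] sum_gp_basic[of x s]
  by (simp add: atLeast0AtMost)

lemma TTrec: "(1 - x*Q^m) * TT x Q (m+1) s = TT x Q m s - Q^m * x^(s+1) * bb Q m s"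
proof (cases m)
  case 0
  then show ?thesis unfolding TT_def using V0 bb_0'[OF Q0 Q1] by simp
next
  case (Suc k)
  then show ?thesis unfolding TT_def using Vrec[of k s] by simp
qed

lemma Pp_pos: "Pp x Q m > 0"
  unfolding Pp_def
proof (rule prod_pos)
  fix i assume "i \<in> {..<m}"
  have "Q^i \<le> 1" using Q0 Q1 by (simp add: power_le_one)
  then have "x * Q^i \<le> x * 1" using x0 by (intro mult_left_mono) auto
  then have "x * Q^i < 1" using x1 by simp
  then show "0 < 1 - x * Q^i" by simp
qed

lemma RRrec: "(1 - x*Q^m) * RR x Q (m+1) s = RR x Q m s - Q^m * x^(s+1) * bb Q m s"
proof -
  have P: "Pp x Q (m+1) = Pp x Q m * (1 - x*Q^m)" unfolding Pp_def by simp
  have ne: "1 - x*Q^m \<noteq> 0" using Pp_pos[of "m+1"] P by auto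
  have ne2: "Pp x Q m \<noteq> 0" using Pp_pos[of m] by simp
  define A where "A = (\<Sum>j<m. Q ^ j * Pp x Q j * bb Q j s)"
  define c where "c = Q ^ m * Pp x Q m * bb Q m s"
  have "RR x Q (m+1) s = 1 / (Pp x Q m * (1 - x*Q^m)) * (1 - x^(s+1) * (A + c))"
    unfolding RR_def P A_def c_def by simp
  then have "(1 - x*Q^m) * RR x Q (m+1) s = 1 / Pp x Q m * (1 - x^(s+1) * (A + c))"
    using ne by simp
  also have "\<dots> = 1 / Pp x Q m * (1 - x^(s+1) * A) - x^(s+1) * c / Pp x Q m"
    by (simp add: algebra_simps diff_divide_distrib)
  also have "x^(s+1) * c / Pp x Q m = Q^m * x^(s+1) * bb Q m s"
    unfolding c_def using ne2 by simp
  finally show ?thesis unfolding RR_def A_def by simp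
qed

lemma TT_RR: "TT x Q m s = RR x Q m s"
proof (induction m)
  case 0
  then show ?case unfolding TT_def RR_def Pp_def by simp
next
  case (Suc m)
  have P: "Pp x Q (m+1) = Pp x Q m * (1 - x*Q^m)" unfolding Pp_def by simp
  have ne: "1 - x*Q^m \<noteq> 0" using Pp_pos[of "m+1"] P by auto
  have "(1 - x*Q^m) * TT x Q (m+1) s = (1 - x*Q^m) * RR x Q (m+1) s"
    using TTrec RRrec Suc by simp
  then show ?case using ne by simp
qed

end

lemma qPi_Suc2: "qPi (n+2) q = qPi n q * (1 - q^(n+1)) * (1 - q^(n+2))"
  using qPi_Suc[of n q] qPi_Suc[of "Suc n" q] by simp

lemma qPi_even: "qPi (2*k) q = qPi k (q^2) * Pp q (q^2) k"
proof (induction k)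
  case 0 then show ?case unfolding Pp_def by simp
next
  case (Suc k)
  have e: "2 * Suc k = 2*k+2" by simp
  have p1: "(q^2)^(Suc k) = q^(2*k+2)"
    by (metis power_mult mult_Suc_right add.commute add_2_eq_Suc')
  have p2: "q*(q^2)^k = q^(2*k+1)"
    by (metis power_mult power_add add.commute power_one_right)
  have "qPi (Suc k) (q^2) = qPi k (q^2) * (1 - q^(2*k+2))"
    using qPi_Suc[of k "q^2"] p1 by simp
  moreover have "Pp q (q^2) (Suc k) = Pp q (q^2) k * (1 - q^(2*k+1))"
    unfolding Pp_def using p2 by simp
  ultimately show ?case unfolding e qPi_Suc2 Suc by (simp add: ac_simps)
qed

lemma qPi_odd: "qPi (2*k+1) q = (1 - q) * qPi k (q^2) * Pp (q^3) (q^2) k"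
proof (induction k)
  case 0 then show ?case unfolding Pp_def qPi_def by simp
next
  case (Suc k)
  have e: "2 * Suc k + 1 = (2*k+1)+2" by simp
  have e2: "2*k+1+1 = 2*k+2" "2*k+1+2 = 2*k+3" by simp_all
  have p1: "(q^2)^(Suc k) = q^(2*k+2)"
    by (metis power_mult mult_Suc_right add.commute add_2_eq_Suc')
  have p2: "q^3*(q^2)^k = q^(2*k+3)"
    by (metis power_mult power_add add.commute)
  have "qPi (Suc k) (q^2) = qPi k (q^2) * (1 - q^(2*k+2))"
    using qPi_Suc[of k "q^2"] p1 by simp
  moreover have "Pp (q^3) (q^2) (Suc k) = Pp (q^3) (q^2) k * (1 - q^(2*k+3))"
    unfolding Pp_def using p2 by simp
  moreover have "qPi (2*Suc k+1) q = qPi (2*k+1) q * (1 - q^(2*k+2)) * (1 - q^(2*k+3))"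
    using qPi_Suc2[of "2*k+1" q] by (simp only: e e2)
  ultimately show ?case using Suc by (simp add: ac_simps del: power_Suc)
qed

lemma T_TT: "T b q k s = TT (q^b) (q^2) k s"
  unfolding T_def TT_def V_def bb_def
  by (cases k) (auto simp: power_mult[symmetric] mult.commute intro!: sum.cong)

theorem lemma5p1:
  fixes q :: real and k s :: nat
  assumes "0 < q" and "q < 1"
  shows "(T 1 q k s = qPi k (q^2) / qPi (2*k) q *
           (1 - q ^ (s+1) * (\<Sum>j<k. q ^ (2*j) * qPi (2*j) q * qPi (j+s) (q^2)
                                   / ((qPi j (q^2))^2 * qPi s (q^2))))) \<and>
         (T 3 q k s = qPi k (q^2) / qPi (2*k+1) q *
           (1 - q - q ^ (3*s+3) * (\<Sum>j<k. q ^ (2*j) * qPi (2*j+1) q * qPi (j+s) (q^2)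
                                   / ((qPi j (q^2))^2 * qPi s (q^2)))))"
proof -
  define Q where "Q = q^2"
  have Q0: "0 < Q" and Q1: "Q < 1" unfolding Q_def using assms
    by (auto simp: power_less_one_iff)
  have x3: "0 < q^3" "q^3 < (1::real)" using assms by (auto simp: power_less_one_iff)
  have nzQ: "\<And>n. qPi n Q \<noteq> 0" using qPi_pos[OF Q0 Q1] by (metis less_irrefl)
  have q1: "1 - q \<noteq> 0" using assms by simp
  have A1: "T 1 q k s = RR q Q k s"
    using T_TT[of 1 q k s] TT_RR[OF Q0 Q1 assms] unfolding Q_def by simp
  have A3: "T 3 q k s = RR (q^3) Q k s"
    using T_TT[of 3 q k s] TT_RR[OF Q0 Q1 x3] unfolding Q_def by simp
  have S1: "(\<Sum>j<k. q ^ (2*j) * qPi (2*j) q * qPi (j+s) (q^2) / ((qPi j (q^2))^2 * qPi s (q^2)))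
      = (\<Sum>j<k. Q ^ j * Pp q Q j * bb Q j s)"
  proof (rule sum.cong)
    fix j assume "j \<in> {..<k}"
    show "q ^ (2*j) * qPi (2*j) q * qPi (j+s) (q^2) / ((qPi j (q^2))^2 * qPi s (q^2))
      = Q ^ j * Pp q Q j * bb Q j s"
      unfolding qPi_even bb_def Q_def[symmetric] using nzQ[of j]
      by (simp add: Q_def power_mult power2_eq_square)
  qed simp
  have S3: "(\<Sum>j<k. q ^ (2*j) * qPi (2*j+1) q * qPi (j+s) (q^2) / ((qPi j (q^2))^2 * qPi s (q^2)))
      = (1 - q) * (\<Sum>j<k. Q ^ j * Pp (q^3) Q j * bb Q j s)"
    unfolding sum_distrib_left
  proof (rule sum.cong)
    fix j assume "j \<in> {..<k}"
    show "q ^ (2*j) * qPi (2*j+1) q * qPi (j+s) (q^2) / ((qPi j (q^2))^2 * qPi s (q^2))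
      = (1 - q) * (Q ^ j * Pp (q^3) Q j * bb Q j s)"
      unfolding qPi_odd bb_def Q_def[symmetric] using nzQ[of j]
      by (simp add: Q_def power_mult power2_eq_square)
  qed simp
  have R1: "qPi k (q^2) / qPi (2*k) q = 1 / Pp q Q k"
    unfolding qPi_even Q_def[symmetric] using nzQ[of k] by simp
  have R3: "qPi k (q^2) / qPi (2*k+1) q = 1 / ((1-q) * Pp (q^3) Q k)"
    unfolding qPi_odd Q_def[symmetric] using nzQ[of k] by simp
  have E1: "T 1 q k s = qPi k (q^2) / qPi (2*k) q *
           (1 - q ^ (s+1) * (\<Sum>j<k. q ^ (2*j) * qPi (2*j) q * qPi (j+s) (q^2)
                                   / ((qPi j (q^2))^2 * qPi s (q^2))))"
    unfolding A1 S1 R1 RR_def ..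
  have p3: "(q^3)^(s+1) = q^(3*s+3)" by (metis power_mult distrib_left mult.right_neutral)
  have "1 - q - q ^ (3*s+3) * ((1 - q) * X) = (1 - q) * (1 - (q^3)^(s+1) * X)" for X
    using p3 by (simp add: algebra_simps del: power_Suc)
  then have E3: "T 3 q k s = qPi k (q^2) / qPi (2*k+1) q *
           (1 - q - q ^ (3*s+3) * (\<Sum>j<k. q ^ (2*j) * qPi (2*j+1) q * qPi (j+s) (q^2)
                                   / ((qPi j (q^2))^2 * qPi s (q^2))))"
    unfolding A3 S3 R3 RR_def using q1 by simp
  show ?thesis using E1 E3 by blast
qed

end
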